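(* For every integer $a\ge 4$, setting $N=\phi(a!)$, we have $\phi(a!)\,\phi((N-1)!)=\phi(N!)$. Consequently $c(a,N-1)\le N$ and $r(a,\phi(a!)-1)<1$ for all $a\ge 4$.
   Context: $\phi$ denotes Euler's totient function. For positive integers $a,b$, $c(a,b)$ is the least positive integer $c$ such that $\phi(a!)\,\phi(b!)$ divides $\phi(c!)$, and $r(a,b)=c(a,b)/(a+b)$. *)

theory Defs
  imports "HOL-Number_Theory.Number_Theory"
begin

definition cfun :: "nat \<Rightarrow> nat \<Rightarrow> nat" where
  "cfun a b = (LEAST c. 0 < c \<and> totient (fact a) * totient (fact b) dvd totient (fact c))"

definition rfun :: "nat \<Rightarrow> nat \<Rightarrow> real" where
  "rfun a b = real (cfun a b) / real (a + b)"

end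

theory Submission
  imports Defs
begin

lemma tot_mult_absorb:
  fixes N m :: nat
  assumes "N > 0" "m > 0" "\<And>p. prime p \<Longrightarrow> p dvd N \<Longrightarrow> p dvd m"
  shows "totient (N * m) = N * totient m"
proof -
  have pf: "prime_factors (N*m) = prime_factors m"
    using assms by (auto simp: prime_factors_product in_prime_factors_iff)
  have "real (totient (N*m)) = real (N*m) * (\<Prod>p\<in>prime_factors (N*m). 1 - 1 / real p)"
    by (rule totient_formula2)
  also have "\<dots> = real N * (real m * (\<Prod>p\<in>prime_factors m. 1 - 1 / real p))"
    by (simp add: pf)
  also have "\<dots> = real N * real (totient m)" by (simp add: totient_formula2)
  finally show ?thesis by (metis of_nat_eq_iff of_nat_mult)
qed

lemma tot24: "totient (24::nat) = 8"
proof -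
  have "totient (24::nat) = totient (2^3 * 3)" by simp
  also have "\<dots> = totient (2^3) * totient (3::nat)" by (rule totient_mult_coprime) (simp add: coprime_iff_gcd_eq_1 gcd_non_0_nat)
  also have "\<dots> = 8" by (simp add: totient_prime_power totient_prime)
  finally show ?thesis .
qed

theorem mainTheorem9:
  fixes a :: nat
  assumes "a \<ge> 4"
  defines "N \<equiv> totient (fact a :: nat)"
  shows "totient (fact a :: nat) * totient (fact (N - 1) :: nat) = totient (fact N :: nat)
         \<and> cfun a (N - 1) \<le> N
         \<and> rfun a (totient (fact a) - 1) < 1"
proof -
  have "fact 4 dvd (fact a :: nat)" using assms by (simp add: fact_dvd)
  hence "totient (fact 4 :: nat) \<le> N" unfolding N_def
    by (intro totient_dvd_mono) auto
  moreover have "(fact 4 :: nat) = 24" by (simp add: fact_numeral)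
  ultimately have N8: "N \<ge> 8" using tot24 by simp
  have "fact a > (2::nat)"
    using \<open>fact 4 dvd (fact a :: nat)\<close> \<open>(fact 4 :: nat) = 24\<close>
    using dvd_imp_le[of "24::nat" "fact a"] by simp
  hence ev: "even N" unfolding N_def by (rule totient_even)
  have eq: "totient (fact N :: nat) = N * totient (fact (N - 1) :: nat)"
  proof -
    have "(fact N :: nat) = N * fact (N - 1)" using N8
      using fact_reduce[of N, where ?'a=nat] by simp
    moreover have "totient (N * fact (N - 1)) = N * totient (fact (N - 1) :: nat)"
    proof (rule tot_mult_absorb)
      fix p :: nat assume p: "prime p" "p dvd N"
      have "p \<noteq> N"
      proof
        assume "p = N"
        with p ev have "p = 2" using prime_odd_nat[of p] prime_ge_2_nat[of p] by fastforce
        with \<open>p = N\<close> N8 show False by simp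
      qed
      moreover have "p \<le> N" using p(2) N8 by (intro dvd_imp_le) auto
      ultimately have "p \<le> N - 1" by simp
      then show "p dvd fact (N - 1)" using p by (intro dvd_fact) (use prime_ge_2_nat[of p] in auto)
    qed (use N8 in auto)
    ultimately show ?thesis by simp
  qed
  have c: "cfun a (N - 1) \<le> N" unfolding cfun_def
    by (rule Least_le) (use eq N8 in \<open>simp add: N_def\<close>)
  have "rfun a (N - 1) < 1"
  proof -
    have "real (cfun a (N - 1)) < real (a + (N - 1))" using c assms N8 by simp
    thus ?thesis unfolding rfun_def by simp
  qed
  moreover have Ne: "totient (fact a::nat) = N" by (simp add: N_def)
  ultimately show ?thesis using eq c by (simp only: Ne)
qed

end
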